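(* Let $K=\{x\in\mathbb{R}^n: Ax\ge b\}$ be a bounded full-dimensional polytope, where $A\in\mathbb{R}^{m\times n}$ has rows $a_1^\top,\dots,a_m^\top$ and $b\in\mathbb{R}^m$. Let $H(x)=\sum_{i=1}^m \frac{a_ia_i^\top}{(a_i^\top x-b_i)^2}$, $F(x)=\frac12\ln\det H(x)$, and $\mathrm{vc}(K)=\arg\min_{x\in K}F(x)$. Let $\mathrm{Cov}(K)$ be the covariance matrix of the uniform distribution on $K$. Then $$\frac{1}{4m^3n^2}\cdot H(\mathrm{vc}(K))\preceq \mathrm{Cov}(K)^{-1}\preceq 4n^2\cdot H(\mathrm{vc}(K)).$$
   Context: $\mathrm{Cov}(K)=\frac{1}{\mathrm{vol}(K)}\int_K (x-\mathrm{cg}(K))(x-\mathrm{cg}(K))^\top\,dx$ where $\mathrm{cg}(K)=\frac{1}{\mathrm{vol}(K)}\int_K x\,dx$ is the centroid. $\preceq$ denotes the Loewner order on symmetric matrices. *)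

theory Defs
  imports "HOL-Analysis.Analysis"
begin

definition polytope :: "real^'n^'m \<Rightarrow> real^'m \<Rightarrow> (real^'n) set" where
  "polytope A b = {x. \<forall>i. A $ i \<bullet> x \<ge> b $ i}"

definition outer :: "real^'n \<Rightarrow> real^'n \<Rightarrow> real^'n^'n" where
  "outer u v = (\<chi> j k. u $ j * v $ k)"

definition barrier_hess :: "real^'n^'m \<Rightarrow> real^'m \<Rightarrow> real^'n \<Rightarrow> real^'n^'n" where
  "barrier_hess A b x = (\<Sum>i\<in>UNIV. (1 / (A $ i \<bullet> x - b $ i)^2) *\<^sub>R outer (A $ i) (A $ i))"

definition vol_barrier :: "real^'n^'m \<Rightarrow> real^'m \<Rightarrow> real^'n \<Rightarrow> real" where
  "vol_barrier A b x = ln (det (barrier_hess A b x)) / 2"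

definition strict_polytope :: "real^'n^'m \<Rightarrow> real^'m \<Rightarrow> (real^'n) set" where
  "strict_polytope A b = {x. \<forall>i. A $ i \<bullet> x > b $ i}"

definition is_vol_center :: "real^'n^'m \<Rightarrow> real^'m \<Rightarrow> real^'n \<Rightarrow> bool" where
  "is_vol_center A b x \<longleftrightarrow> x \<in> strict_polytope A b \<and>
     (\<forall>y\<in>strict_polytope A b. vol_barrier A b x \<le> vol_barrier A b y)"

definition centroid :: "(real^'n) set \<Rightarrow> real^'n" where
  "centroid K = (1 / measure lebesgue K) *\<^sub>R integral K (\<lambda>x. x)"

definition covariance :: "(real^'n) set \<Rightarrow> real^'n^'n" where
  "covariance K = (1 / measure lebesgue K) *\<^sub>R
      integral K (\<lambda>x. outer (x - centroid K) (x - centroid K))"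

definition loewner_le :: "real^'n^'n \<Rightarrow> real^'n^'n \<Rightarrow> bool" where
  "loewner_le P Q \<longleftrightarrow> (\<forall>v. v \<bullet> (P *v v) \<le> v \<bullet> (Q *v v))"

end

theory Submission
  imports Defs
begin


lemma sym_bilin:
  fixes M :: "real^'n^'n"
  assumes "transpose M = M"
  shows "v \<bullet> (M *v w) = w \<bullet> (M *v v)"
proof -
  have "v \<bullet> (M *v w) = (\<Sum>i\<in>UNIV. \<Sum>j\<in>UNIV. v$i * M$i$j * w$j)"
    by (simp add: inner_vec_def matrix_vector_mult_def sum_distrib_left mult.assoc)
  also have "\<dots> = (\<Sum>j\<in>UNIV. \<Sum>i\<in>UNIV. v$i * M$i$j * w$j)" by (rule sum.swap)
  also have "\<dots> = (\<Sum>j\<in>UNIV. \<Sum>i\<in>UNIV. w$j * M$j$i * v$i)"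
  proof -
    have "M$i$j = M$j$i" for i j using assms by (metis transpose_def vec_lambda_beta)
    then show ?thesis by (simp add: mult.commute mult.left_commute)
  qed
  also have "\<dots> = w \<bullet> (M *v v)"
    by (simp add: inner_vec_def matrix_vector_mult_def sum_distrib_left mult.assoc)
  finally show ?thesis .
qed

lemma psd_cs:
  fixes M :: "real^'n^'n"
  assumes sym: "\<And>v w. v \<bullet> (M *v w) = w \<bullet> (M *v v)" and psd: "\<And>v. 0 \<le> v \<bullet> (M *v v)"
  shows "(w \<bullet> (M *v v))^2 \<le> (w \<bullet> (M *v w)) * (v \<bullet> (M *v v))"
proof -
  define a where "a = w \<bullet> (M *v w)"
  define bb where "bb = w \<bullet> (M *v v)"
  define c where "c = v \<bullet> (M *v v)"
  have q: "0 \<le> a + 2 * t * bb + t^2 * c" for t :: real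
  proof -
    have "0 \<le> (w + t *\<^sub>R v) \<bullet> (M *v (w + t *\<^sub>R v))" by (rule psd)
    also have "\<dots> = a + t * (v \<bullet> (M *v w)) + t * bb + t^2 * c"
      by (simp add: a_def bb_def c_def matrix_vector_right_distrib inner_add_left inner_add_right
          matrix_vector_mult_scaleR algebra_simps power2_eq_square)
    also have "v \<bullet> (M *v w) = bb" unfolding bb_def by (rule sym)
    finally show ?thesis by (simp add: algebra_simps)
  qed
  have "c \<ge> 0" unfolding c_def by (rule psd)
  show ?thesis
  proof (cases "c = 0")
    case True
    have "bb = 0"
    proof (rule ccontr)
      assume "bb \<noteq> 0"
      have "0 \<le> a + 2 * (-(a+1)/(2*bb)) * bb + (-(a+1)/(2*bb))^2 * c" by (rule q)
      also have "\<dots> = -1" using \<open>bb \<noteq> 0\<close> True by (simp add: field_simps)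
      finally show False by simp
    qed
    then show ?thesis using True by (simp add: a_def bb_def c_def)
  next
    case False
    with \<open>c \<ge> 0\<close> have "c > 0" by simp
    have "0 \<le> a + 2 * (-bb/c) * bb + (-bb/c)^2 * c" by (rule q)
    also have "\<dots> = a - bb^2/c" using \<open>c > 0\<close> by (simp add: field_simps power2_eq_square)
    finally have "bb^2 \<le> a * c" using \<open>c > 0\<close> by (simp add: field_simps)
    then show ?thesis by (simp add: a_def bb_def c_def)
  qed
qed

lemma outer_mv: "outer u w *v v = (w \<bullet> v) *\<^sub>R u"
  by (simp add: vec_eq_iff outer_def matrix_vector_mult_def inner_vec_def sum_distrib_left mult.assoc mult.commute mult.left_commute)

lemma hess_bilin:
  "w \<bullet> (barrier_hess A b x *v v) = (\<Sum>i\<in>UNIV. (A$i \<bullet> w) * (A$i \<bullet> v) / (A$i \<bullet> x - b$i)^2)"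
proof -
  have "barrier_hess A b x *v v = (\<Sum>i\<in>UNIV. (1 / (A $ i \<bullet> x - b $ i)^2) *\<^sub>R (outer (A $ i) (A $ i) *v v))"
    unfolding barrier_hess_def
    apply (simp add: vec_eq_iff matrix_vector_mult_def sum_component outer_def sum_distrib_left sum_distrib_right)
    apply (subst sum.swap) apply (simp add: algebra_simps)
    done
  then show ?thesis
    by (simp add: outer_mv inner_sum_right algebra_simps inner_commute)
qed

lemma hess_sym: "transpose (barrier_hess A b x) = barrier_hess A b x"
  by (simp add: vec_eq_iff transpose_def barrier_hess_def outer_def sum_component mult.commute)

lemma matrix_inv_props:
  fixes M :: "real^'n^'n"
  assumes "invertible M"
  shows "M ** matrix_inv M = mat 1" "matrix_inv M ** M = mat 1"
proof -
  have "\<exists>M'. M ** M' = mat 1 \<and> M' ** M = mat 1" using assms unfolding invertible_def .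
  from someI_ex[OF this] show "M ** matrix_inv M = mat 1" "matrix_inv M ** M = mat 1"
    unfolding matrix_inv_def by auto
qed

lemma inv_of_ker:
  fixes M :: "real^'n^'n"
  assumes "\<And>v. M *v v = 0 \<Longrightarrow> v = 0"
  shows "invertible M"
proof -
  have "inj ((*v) M)"
  proof (rule injI)
    fix x y assume "M *v x = M *v y"
    then have "M *v (x - y) = 0" by (simp add: matrix_vector_mult_diff_distrib)
    then have "x - y = 0" by (rule assms)
    then show "x = y" by simp
  qed
  then show ?thesis using invertible_left_inverse matrix_left_invertible_injective by blast
qed

lemma pd_det_pos:
  fixes M :: "real^'n^'n"
  assumes pd: "\<And>v. v \<noteq> 0 \<Longrightarrow> 0 < v \<bullet> (M *v v)"
  shows "det M > 0"
proof -
  define N where "N t = (1 - t) *\<^sub>R (mat 1 :: real^'n^'n) + t *\<^sub>R M" for t :: real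
  have nz: "det (N t) \<noteq> 0" if "0 \<le> t" "t \<le> 1" for t
  proof -
    have "invertible (N t)"
    proof (rule inv_of_ker)
      fix v assume v: "N t *v v = 0"
      show "v = 0"
      proof (rule ccontr)
        assume "v \<noteq> 0"
        have "v \<bullet> (N t *v v) = (1 - t) * (v \<bullet> v) + t * (v \<bullet> (M *v v))"
          by (simp add: N_def matrix_vector_mult_add_rdistrib inner_add_right flip: scaleR_matrix_vector_assoc)
        moreover have "0 < (1 - t) * (v \<bullet> v) + t * (v \<bullet> (M *v v))"
        proof (cases "t = 0")
          case True then show ?thesis using \<open>v \<noteq> 0\<close> by simp
        next
          case False
          then have "0 < t * (v \<bullet> (M *v v))" using that pd[OF \<open>v \<noteq> 0\<close>] by simp
          moreover have "0 \<le> (1 - t) * (v \<bullet> v)" using that by simp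
          ultimately show ?thesis by linarith
        qed
        ultimately show False using v by simp
      qed
    qed
    then show ?thesis using invertible_det_nz by blast
  qed
  have cont: "continuous_on {0..1} (\<lambda>t. det (N t))"
    unfolding det_def N_def by (intro continuous_intros) 
  show ?thesis
  proof (rule ccontr)
    assume "\<not> det M > 0"
    then have "det (N 1) \<le> 0" by (simp add: N_def)
    moreover have "det (N 0) = 1" by (simp add: N_def)
    ultimately obtain t where "0 \<le> t" "t \<le> 1" "det (N t) = 0"
      using IVT2'[of "\<lambda>t. det (N t)" 1 0 0, OF _ _ _ cont] by auto
    with nz show False by blast
  qed
qed



lemma cont_integrable:
  fixes f :: "'a::euclidean_space \<Rightarrow> 'b::euclidean_space"
  assumes "compact S" "continuous_on S f" shows "f integrable_on S"
proof -
  have "integrable lborel (\<lambda>x. indicator S x *\<^sub>R f x)" by (rule borel_integrable_compact[OF assms])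
  then have "set_integrable lebesgue S f" unfolding set_integrable_def
    by (simp add: integrable_completion)
  then show ?thesis by (rule set_lebesgue_integral_eq_integral)
qed

lemma cov_bilin:
  fixes K :: "(real^'n) set"
  assumes "compact K"
  shows "w \<bullet> (covariance K *v v) =
    integral K (\<lambda>x. (w \<bullet> (x - centroid K)) * (v \<bullet> (x - centroid K))) / measure lebesgue K"
proof -
  define c where "c = centroid K"
  define F where "F x = outer (x - c) (x - c)" for x
  have int: "F integrable_on K"
    by (rule cont_integrable[OF assms]) (unfold F_def outer_def, intro continuous_intros)
  have lin: "linear (\<lambda>X::real^'n^'n. w \<bullet> (X *v v))"
    by (rule linearI) (simp_all add: matrix_vector_mult_add_rdistrib inner_add_right
        flip: scaleR_matrix_vector_assoc)
  have bl: "bounded_linear (\<lambda>X::real^'n^'n. w \<bullet> (X *v v))"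
    using lin linear_conv_bounded_linear by blast
  have "integral K ((\<lambda>X. w \<bullet> (X *v v)) \<circ> F) = w \<bullet> (integral K F *v v)"
    by (rule integral_linear[OF int bl])
  moreover have "((\<lambda>X. w \<bullet> (X *v v)) \<circ> F) = (\<lambda>x. (w \<bullet> (x - c)) * (v \<bullet> (x - c)))"
    by (auto simp: F_def outer_mv inner_commute)
  moreover have "covariance K = (1 / measure lebesgue K) *\<^sub>R integral K F"
    unfolding covariance_def F_def c_def ..
  ultimately show ?thesis
    by (simp add: c_def flip: scaleR_matrix_vector_assoc)
qed

lemma cg_inner:
  fixes K :: "(real^'n) set"
  assumes "compact K"
  shows "u \<bullet> centroid K = integral K (\<lambda>x. u \<bullet> x) / measure lebesgue K"
proof -
  have int: "(\<lambda>x. x) integrable_on K"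
    by (rule cont_integrable[OF assms]) (intro continuous_intros)
  have "integral K ((\<lambda>y. u \<bullet> y) \<circ> (\<lambda>x. x)) = u \<bullet> integral K (\<lambda>x. x)"
    by (rule integral_linear[OF int bounded_linear_inner_right])
  then show ?thesis unfolding centroid_def by (simp add: o_def)
qed

lemma measure_int:
  fixes K :: "(real^'n) set"
  assumes "compact K"
  shows "integral K (\<lambda>x. k) = k * measure lebesgue K"
proof -
  have "measure lebesgue K = integral K (\<lambda>x. 1::real)"
    by (rule lmeasure_integral[OF lmeasurable_compact[OF assms]])
  moreover have "integral K (\<lambda>x. k * 1) = k * integral K (\<lambda>x. 1::real)"
    by (rule integral_mult[symmetric]) (rule cont_integrable[OF assms], intro continuous_intros)
  ultimately show ?thesis by simp
qed

lemma mean_zero: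
  fixes K :: "(real^'n) set"
  assumes "compact K" "measure lebesgue K > 0"
  shows "integral K (\<lambda>x. u \<bullet> (x - centroid K)) = 0"
proof -
  have "integral K (\<lambda>x. u \<bullet> x - u \<bullet> centroid K) = integral K (\<lambda>x. u \<bullet> x) - integral K (\<lambda>x. u \<bullet> centroid K)"
    by (rule integral_diff; rule cont_integrable[OF assms(1)]; intro continuous_intros)
  also have "\<dots> = 0" using cg_inner[OF assms(1), of u] measure_int[OF assms(1)] assms(2) by simp
  finally show ?thesis by (simp add: inner_diff_right)
qed

lemma homothety_integral:
  fixes K :: "(real^'n) set" and h :: "real^'n \<Rightarrow> real"
  assumes K: "compact K" and h: "continuous_on UNIV h" and l: "0 < l"
  shows "integral ((\<lambda>x. l *\<^sub>R x + c) ` K) h = l ^ CARD('n) * integral K (\<lambda>x. h (l *\<^sub>R x + c))"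
proof (cases "K = {}")
  case True then show ?thesis by simp
next
  case False
  define \<phi> where "\<phi> x = l *\<^sub>R x + c" for x :: "real^'n"
  obtain a where a: "K \<subseteq> cbox (-a) a" using bounded_subset_cbox_symmetric compact_imp_bounded[OF K] by metis
  have ne: "cbox (-a) a \<noteq> {}" using a False by blast
  define S where "S = \<phi> ` K"
  define T where "T = \<phi> ` cbox (-a) a"
  have T: "T = cbox (\<phi> (-a)) (\<phi> a)" unfolding T_def \<phi>_def using ne l
    by (simp add: image_affinity_cbox)
  have ST: "S \<subseteq> T" unfolding S_def T_def using a by blast
  have Sc: "compact S" unfolding S_def \<phi>_def
    by (intro compact_continuous_image K continuous_intros)
  have "h integrable_on S" by (rule cont_integrable[OF Sc continuous_on_subset[OF h]]) auto
  then have hS: "(h has_integral integral S h) S" by (rule integrable_integral)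
  define g where "g y = (if y \<in> S then h y else 0)" for y
  have gT: "(g has_integral integral S h) (cbox (\<phi> (-a)) (\<phi> a))"
    using hS ST T unfolding g_def by (simp add: has_integral_restrict)
  from has_integral_affinity[OF gT, of l c] l
  have *: "((\<lambda>x. g (l *\<^sub>R x + c)) has_integral (1 / l ^ CARD('n)) *\<^sub>R integral S h)
      ((\<lambda>x. (1 / l) *\<^sub>R x + - ((1 / l) *\<^sub>R c)) ` cbox (\<phi> (-a)) (\<phi> a))" by simp
  have set: "(\<lambda>x. (1 / l) *\<^sub>R x + - ((1 / l) *\<^sub>R c)) ` cbox (\<phi> (-a)) (\<phi> a) = cbox (-a) a"
  proof -
    have "(\<lambda>x. (1 / l) *\<^sub>R x + - ((1 / l) *\<^sub>R c)) ` cbox (\<phi> (-a)) (\<phi> a)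
        = (\<lambda>x. (1 / l) *\<^sub>R x + - ((1 / l) *\<^sub>R c)) ` (\<phi> ` cbox (-a) a)" using T T_def by simp
    also have "\<dots> = (\<lambda>x. x) ` cbox (-a) a" unfolding image_image \<phi>_def using l
      by (intro image_cong) (auto simp: algebra_simps)
    finally show ?thesis by simp
  qed
  have gphi: "g (l *\<^sub>R x + c) = (if x \<in> K then h (l *\<^sub>R x + c) else 0)" for x
  proof -
    have "l *\<^sub>R x + c \<in> S \<longleftrightarrow> x \<in> K"
    proof
      assume "l *\<^sub>R x + c \<in> S"
      then obtain y where "y \<in> K" "l *\<^sub>R x + c = l *\<^sub>R y + c" unfolding S_def \<phi>_def by auto
      then show "x \<in> K" using l by simp
    qed (auto simp: S_def \<phi>_def)
    then show ?thesis unfolding g_def by simp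
  qed
  have "((\<lambda>x. if x \<in> K then h (l *\<^sub>R x + c) else 0) has_integral (1 / l ^ CARD('n)) *\<^sub>R integral S h) (cbox (-a) a)"
    using * unfolding set gphi .
  then have "((\<lambda>x. h (l *\<^sub>R x + c)) has_integral (1 / l ^ CARD('n)) *\<^sub>R integral S h) K"
    using a by (simp add: has_integral_restrict)
  then have "integral K (\<lambda>x. h (l *\<^sub>R x + c)) = integral S h / l ^ CARD('n)"
    by (simp add: integral_unique)
  then show ?thesis using l unfolding S_def \<phi>_def by (simp add: field_simps)
qed

lemma pow_bound:
  assumes "n \<ge> (2::nat)"
  shows "(1 - 1 / real n) ^ n \<ge> 1 / 4"
proof -
  consider "n = 2" | "n = 3" | "n \<ge> 4" using assms by linarith
  then show ?thesis
  proof cases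
    case 1 then show ?thesis by (simp add: power2_eq_square)
  next
    case 2 then show ?thesis by (simp add: power3_eq_cube)
  next
    case 3
    define x where "x = 1 - 1 / real n"
    have n4: "real n \<ge> 4" using 3 by simp
    have x0: "x > 0" unfolding x_def using n4 by (simp add: field_simps)
    have "ln (1 / x) \<le> 1 / x - 1" using x0 by (intro ln_le_minus_one) simp
    then have lnx: "ln x \<ge> 1 - 1 / x" using x0 by (simp add: ln_div)
    have "1 - 1 / x = - 1 / (real n - 1)" unfolding x_def using n4 by (simp add: field_simps)
    then have l1: "ln x \<ge> - 1 / (real n - 1)" using lnx by simp
    have "real n * ln x \<ge> real n * (- 1 / (real n - 1))" by (rule mult_left_mono[OF l1]) simp
    moreover have "real n * (- 1 / (real n - 1)) \<ge> - 4 / 3" using n4 by (simp add: field_simps)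
    ultimately have e: "real n * ln x \<ge> - 4 / 3" by linarith
    have "x ^ n = exp (real n * ln x)" using x0 by (simp add: exp_of_nat_mult)
    also have "\<dots> \<ge> exp (- 4 / 3)" using e by simp
    finally have xe: "x ^ n \<ge> exp (- 4 / 3)" .
    have "exp (4 / 3 :: real) ^ 3 = exp 4" by (simp flip: exp_of_nat_mult)
    also have "\<dots> = exp 1 ^ 4" by (simp flip: exp_of_nat_mult)
    also have "\<dots> \<le> (272 / 100) ^ 4" using e_less_272 by (intro power_mono) auto
    also have "\<dots> < 4 ^ 3" by (simp add: power_divide)
    finally have "exp (4 / 3 :: real) < 4"
      using power_less_imp_less_base[of "exp (4/3::real)" 3 4] by simp
    then have "exp (- 4 / 3 :: real) > 1 / 4"
      by (simp add: exp_minus field_simps)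
    with xe show ?thesis unfolding x_def by simp
  qed
qed

lemma homothety_expand:
  fixes K :: "(real^'n) set" and u :: "real^'n"
  assumes K: "compact K" and V: "measure lebesgue K > 0" and l: "0 < l"
  defines "\<mu> \<equiv> u \<bullet> centroid K"
  shows "integral ((\<lambda>x. l *\<^sub>R x + (1 - l) *\<^sub>R p) ` K) (\<lambda>y. (u \<bullet> y - \<mu>)^2)
     = l ^ CARD('n) * (l^2 * integral K (\<lambda>x. (u \<bullet> (x - centroid K))^2) + (1 - l)^2 * (u \<bullet> p - \<mu>)^2 * measure lebesgue K)"
proof -
  have ci: "\<And>g :: real^'n \<Rightarrow> real. continuous_on UNIV g \<Longrightarrow> g integrable_on K"
    using cont_integrable[OF K] continuous_on_subset by blast
  define f where "f x = u \<bullet> (x - centroid K)" for x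
  define D where "D = u \<bullet> p - \<mu>"
  have cf: "continuous_on UNIV f" unfolding f_def by (intro continuous_intros)
  have eq: "(u \<bullet> (l *\<^sub>R x + (1 - l) *\<^sub>R p) - \<mu>)^2 = l^2 * (f x)^2 + (2 * l * (1 - l) * D) * f x + (1 - l)^2 * D^2" for x
    unfolding f_def D_def \<mu>_def by (simp add: inner_add_right inner_diff_right power2_eq_square algebra_simps)
  have "integral ((\<lambda>x. l *\<^sub>R x + (1 - l) *\<^sub>R p) ` K) (\<lambda>y. (u \<bullet> y - \<mu>)^2)
      = l ^ CARD('n) * integral K (\<lambda>x. (u \<bullet> (l *\<^sub>R x + (1 - l) *\<^sub>R p) - \<mu>)^2)"
    by (rule homothety_integral[OF K _ l]) (intro continuous_intros)
  also have "integral K (\<lambda>x. (u \<bullet> (l *\<^sub>R x + (1 - l) *\<^sub>R p) - \<mu>)^2)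
     = integral K (\<lambda>x. l^2 * (f x)^2 + (2 * l * (1 - l) * D) * f x + (1 - l)^2 * D^2)"
    by (simp add: eq)
  also have "\<dots> = integral K (\<lambda>x. l^2 * (f x)^2) + integral K (\<lambda>x. (2 * l * (1 - l) * D) * f x)
      + integral K (\<lambda>x. (1 - l)^2 * D^2)"
  proof -
    have i1: "(\<lambda>x. l^2 * (f x)^2) integrable_on K" by (rule ci) (unfold f_def, intro continuous_intros)
    have i2: "(\<lambda>x. (2 * l * (1 - l) * D) * f x) integrable_on K" by (rule ci) (unfold f_def, intro continuous_intros)
    have i3: "(\<lambda>x. (1 - l)^2 * D^2) integrable_on K" by (rule ci) (intro continuous_intros)
    have "integral K (\<lambda>x. l^2 * (f x)^2 + (2 * l * (1 - l) * D) * f x + (1 - l)^2 * D^2)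
       = integral K (\<lambda>x. l^2 * (f x)^2 + (2 * l * (1 - l) * D) * f x) + integral K (\<lambda>x. (1 - l)^2 * D^2)"
      by (rule integral_add[OF integrable_add[OF i1 i2] i3])
    also have "integral K (\<lambda>x. l^2 * (f x)^2 + (2 * l * (1 - l) * D) * f x)
       = integral K (\<lambda>x. l^2 * (f x)^2) + integral K (\<lambda>x. (2 * l * (1 - l) * D) * f x)"
      by (rule integral_add[OF i1 i2])
    finally show ?thesis .
  qed
  also have "integral K (\<lambda>x. l^2 * (f x)^2) = l^2 * integral K (\<lambda>x. (f x)^2)"
    by (rule integral_mult[symmetric]) (rule ci, unfold f_def, intro continuous_intros)
  also have "integral K (\<lambda>x. (2 * l * (1 - l) * D) * f x) = (2 * l * (1 - l) * D) * integral K f"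
    by (rule integral_mult[symmetric]) (rule ci, unfold f_def, intro continuous_intros)
  also have "integral K f = 0" unfolding f_def by (rule mean_zero[OF K V])
  also have "integral K (\<lambda>x. (1 - l)^2 * D^2) = (1 - l)^2 * D^2 * measure lebesgue K"
    by (rule measure_int[OF K])
  finally show ?thesis unfolding f_def D_def by simp
qed

lemma homothety_ineq:
  fixes K :: "(real^'n) set"
  assumes K: "compact K" "convex K" and V: "measure lebesgue K > 0" and l: "0 < l" "l \<le> 1" and p: "p \<in> K"
  shows "l ^ CARD('n) * (l^2 * integral K (\<lambda>x. (u \<bullet> (x - centroid K))^2) + (1 - l)^2 * (u \<bullet> p - u \<bullet> centroid K)^2 * measure lebesgue K)
     \<le> integral K (\<lambda>x. (u \<bullet> (x - centroid K))^2)"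
proof -
  define S where "S = (\<lambda>x. l *\<^sub>R x + (1 - l) *\<^sub>R p) ` K"
  have SK: "S \<subseteq> K"
  proof
    fix y assume "y \<in> S"
    then obtain x where x: "x \<in> K" "y = l *\<^sub>R x + (1 - l) *\<^sub>R p" unfolding S_def by auto
    show "y \<in> K" using convexD[OF K(2) x(1) p, of l "1 - l"] l x by simp
  qed
  have Sc: "compact S" unfolding S_def by (intro compact_continuous_image K continuous_intros)
  have "integral S (\<lambda>y. (u \<bullet> y - u \<bullet> centroid K)^2) \<le> integral K (\<lambda>y. (u \<bullet> y - u \<bullet> centroid K)^2)"
  proof (rule integral_subset_le[OF SK])
    show "(\<lambda>y. (u \<bullet> y - u \<bullet> centroid K)^2) integrable_on S"
      by (rule cont_integrable[OF Sc]) (intro continuous_intros)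
    show "(\<lambda>y. (u \<bullet> y - u \<bullet> centroid K)^2) integrable_on K"
      by (rule cont_integrable[OF K(1)]) (intro continuous_intros)
  qed auto
  moreover have "integral S (\<lambda>y. (u \<bullet> y - u \<bullet> centroid K)^2) = l ^ CARD('n) * (l^2 * integral K (\<lambda>x. (u \<bullet> (x - centroid K))^2) + (1 - l)^2 * (u \<bullet> p - u \<bullet> centroid K)^2 * measure lebesgue K)"
    unfolding S_def by (rule homothety_expand[OF K(1) V l(1)])
  ultimately show ?thesis by (simp add: inner_diff_right)
qed

lemma var_lower:
  fixes K :: "(real^'n) set" and u p q :: "real^'n"
  assumes K: "compact K" "convex K" and V: "measure lebesgue K > 0"
    and p: "p \<in> K" "u \<bullet> p \<ge> c + r" and q: "q \<in> K" "u \<bullet> q \<le> c - r" and r: "r \<ge> 0"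
  shows "r^2 * measure lebesgue K \<le> 4 * real CARD('n)^2 * integral K (\<lambda>x. (u \<bullet> (x - centroid K))^2)"
proof -
  define W where "W = integral K (\<lambda>x. (u \<bullet> (x - centroid K))^2)"
  define Vm where "Vm = measure lebesgue K"
  define \<mu> where "\<mu> = u \<bullet> centroid K"
  define N where "N = CARD('n)"
  have W0: "W \<ge> 0" unfolding W_def
    by (rule integral_nonneg) (rule cont_integrable[OF K(1)], intro continuous_intros, simp)
  have N1: "N \<ge> 1" unfolding N_def by (simp add: Suc_le_eq)
  have Vm0: "Vm > 0" using V Vm_def by simp
  consider "N \<ge> 2" | "N = 1" using N1 by linarith
  then show ?thesis
  proof cases
    case 1
    define l where "l = 1 - 1 / real N"
    have l0: "0 < l" "l \<le> 1" using 1 unfolding l_def by (auto simp: field_simps)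
    have lN: "l ^ N \<ge> 1 / 4" unfolding l_def by (rule pow_bound[OF 1])
    have l1: "(1 - l)^2 = 1 / real N ^ 2" unfolding l_def by (simp add: power_divide)
    have key: "l ^ N * (1 - l)^2 * (u \<bullet> z - \<mu>)^2 * Vm \<le> W" if "z \<in> K" for z
    proof -
      have "l ^ N * (l^2 * W + (1 - l)^2 * (u \<bullet> z - \<mu>)^2 * Vm) \<le> W"
        using homothety_ineq[OF K V l0 that, of u] unfolding W_def Vm_def \<mu>_def N_def .
      moreover have "0 \<le> l ^ N * (l^2 * W)" using l0 W0 by simp
      ultimately show ?thesis by (simp add: algebra_simps)
    qed
    obtain z where z: "z \<in> K" "r^2 \<le> (u \<bullet> z - \<mu>)^2"
    proof (cases "\<mu> \<le> c")
      case True
      have "r^2 \<le> (u \<bullet> p - \<mu>)^2" using True p r by (intro power_mono) auto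
      then show ?thesis using that p by blast
    next
      case False
      have "r^2 \<le> (\<mu> - u \<bullet> q)^2" using False q r by (intro power_mono) auto
      also have "\<dots> = (u \<bullet> q - \<mu>)^2" by (simp add: power2_commute)
      finally show ?thesis using that q by blast
    qed
    have "(1/4) * (r^2 * Vm) \<le> l ^ N * ((u \<bullet> z - \<mu>)^2 * Vm)"
      using lN z(2) Vm0 by (intro mult_mono) auto
    then have "(1/4) * (r^2 * Vm) / real N ^ 2 \<le> l ^ N * (1 - l)^2 * (u \<bullet> z - \<mu>)^2 * Vm"
      unfolding l1 using N1 by (simp add: field_simps)
    also have "\<dots> \<le> W" by (rule key[OF z(1)])
    finally have "(1/4) * (r^2 * Vm) / real N ^ 2 \<le> W" .
    then show ?thesis using N1 unfolding W_def Vm_def N_def by (simp add: field_simps)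
  next
    case 2
    show ?thesis
    proof (cases "u = 0")
      case True
      then have "r = 0" using p q r by simp
      then show ?thesis using W0 unfolding W_def by simp
    next
      case u0: False
      have Kne: "K \<noteq> {}" using p by auto
      have cu: "continuous_on K (\<lambda>x. u \<bullet> x)" by (intro continuous_intros)
      obtain pM where pM: "pM \<in> K" "\<And>y. y \<in> K \<Longrightarrow> u \<bullet> y \<le> u \<bullet> pM"
        using continuous_attains_sup[OF K(1) Kne cu] by blast
      obtain qm where qm: "qm \<in> K" "\<And>y. y \<in> K \<Longrightarrow> u \<bullet> qm \<le> u \<bullet> y"
        using continuous_attains_inf[OF K(1) Kne cu] by blast
      define l :: real where "l = 1 / 2"
      define S1 where "S1 = (\<lambda>x. l *\<^sub>R x + (1 - l) *\<^sub>R pM) ` K"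
      define S2 where "S2 = (\<lambda>x. l *\<^sub>R x + (1 - l) *\<^sub>R qm) ` K"
      define m where "m = (u \<bullet> pM + u \<bullet> qm) / 2"
      define h where "h y = (u \<bullet> y - \<mu>)^2" for y
      have S1K: "S1 \<subseteq> K"
      proof
        fix y assume "y \<in> S1"
        then obtain x where x: "x \<in> K" "y = l *\<^sub>R x + (1 - l) *\<^sub>R pM" unfolding S1_def by auto
        show "y \<in> K" using convexD[OF K(2) x(1) pM(1), of l "1 - l"] x by (simp add: l_def)
      qed
      have S2K: "S2 \<subseteq> K"
      proof
        fix y assume "y \<in> S2"
        then obtain x where x: "x \<in> K" "y = l *\<^sub>R x + (1 - l) *\<^sub>R qm" unfolding S2_def by auto
        show "y \<in> K" using convexD[OF K(2) x(1) qm(1), of l "1 - l"] x by (simp add: l_def)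
      qed
      have S1m: "u \<bullet> y \<ge> m" if y: "y \<in> S1" for y
      proof -
        obtain x where x: "x \<in> K" "y = l *\<^sub>R x + (1 - l) *\<^sub>R pM" using y unfolding S1_def by auto
        show ?thesis using qm(2)[OF x(1)] x(2) by (simp add: m_def l_def inner_add_right)
      qed
      have S2m: "u \<bullet> y \<le> m" if y: "y \<in> S2" for y
      proof -
        obtain x where x: "x \<in> K" "y = l *\<^sub>R x + (1 - l) *\<^sub>R qm" using y unfolding S2_def by auto
        show ?thesis using pM(2)[OF x(1)] x(2) by (simp add: m_def l_def inner_add_right)
      qed
      have neg: "negligible (S1 \<inter> S2)"
      proof (rule negligible_subset[OF negligible_hyperplane[of u m]])
        show "u \<noteq> 0 \<or> m \<noteq> 0" using u0 by simp
        show "S1 \<inter> S2 \<subseteq> {x. u \<bullet> x = m}" using S1m S2m by force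
      qed
      have S1c: "compact S1" unfolding S1_def by (intro compact_continuous_image K continuous_intros)
      have S2c: "compact S2" unfolding S2_def by (intro compact_continuous_image K continuous_intros)
      have hc: "continuous_on A h" for A unfolding h_def by (intro continuous_intros)
      have i1: "(h has_integral integral S1 h) S1" by (rule integrable_integral, rule cont_integrable[OF S1c hc])
      have i2: "(h has_integral integral S2 h) S2" by (rule integrable_integral, rule cont_integrable[OF S2c hc])
      have "(h has_integral (integral S1 h + integral S2 h)) (S1 \<union> S2)"
        by (rule has_integral_Un[OF i1 i2 neg])
      then have "integral S1 h + integral S2 h = integral (S1 \<union> S2) h" by (simp add: integral_unique)
      also have "\<dots> \<le> integral K h"
      proof (rule integral_subset_le)
        show "S1 \<union> S2 \<subseteq> K" using S1K S2K by blast
        show "h integrable_on S1 \<union> S2" by (rule cont_integrable[OF compact_Un[OF S1c S2c] hc])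
        show "h integrable_on K" by (rule cont_integrable[OF K(1) hc])
      qed (simp add: h_def)
      also have "integral K h = W" unfolding h_def W_def \<mu>_def by (simp add: inner_diff_right)
      finally have sum: "integral S1 h + integral S2 h \<le> W" .
      have e1: "integral S1 h = l ^ N * (l^2 * W + (1 - l)^2 * (u \<bullet> pM - \<mu>)^2 * Vm)"
        unfolding S1_def h_def W_def \<mu>_def Vm_def N_def
        by (rule homothety_expand[OF K(1) V]) (simp add: l_def)
      have e2: "integral S2 h = l ^ N * (l^2 * W + (1 - l)^2 * (u \<bullet> qm - \<mu>)^2 * Vm)"
        unfolding S2_def h_def W_def \<mu>_def Vm_def N_def
        by (rule homothety_expand[OF K(1) V]) (simp add: l_def)
      define D1 where "D1 = u \<bullet> pM - \<mu>"
      define D2 where "D2 = u \<bullet> qm - \<mu>"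
      have "2 * r \<le> D1 - D2" using pM(2)[OF p(1)] qm(2)[OF q(1)] p q unfolding D1_def D2_def by simp
      then have "(2 * r)^2 \<le> (D1 - D2)^2" using r by (intro power_mono) auto
      moreover have "(D1 - D2)^2 \<le> 2 * (D1^2 + D2^2)" using zero_le_power2[of "D1 + D2"]
        by (simp add: power2_eq_square algebra_simps)
      ultimately have "2 * r^2 \<le> D1^2 + D2^2" by (simp add: power_mult_distrib)
      then have "2 * r^2 * Vm \<le> (D1^2 + D2^2) * Vm" using Vm0 by (intro mult_right_mono) auto
      moreover have "(1/2) * ((1/4) * W + (1/4) * D1^2 * Vm) + (1/2) * ((1/4) * W + (1/4) * D2^2 * Vm) \<le> W"
        using sum e1 e2 2 unfolding D1_def D2_def l_def by (simp add: power2_eq_square)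
      ultimately have "r^2 * Vm \<le> 3 * W" by (simp add: algebra_simps)
      then show ?thesis using 2 W0 unfolding W_def Vm_def N_def by simp
    qed
  qed
qed

lemma var_le_shift:
  fixes K :: "(real^'n) set" and u :: "real^'n"
  assumes K: "compact K" and V: "measure lebesgue K > 0"
  shows "integral K (\<lambda>x. (u \<bullet> (x - centroid K))^2) \<le> integral K (\<lambda>x. (u \<bullet> x - c)^2)"
proof -
  have ci: "\<And>g :: real^'n \<Rightarrow> real. continuous_on UNIV g \<Longrightarrow> g integrable_on K"
    using cont_integrable[OF K] continuous_on_subset by blast
  define f where "f x = u \<bullet> (x - centroid K)" for x
  define D where "D = u \<bullet> centroid K - c"
  have eq: "(u \<bullet> x - c)^2 = (f x)^2 + (2 * D) * f x + D^2" for x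
    unfolding f_def D_def by (simp add: inner_diff_right power2_eq_square algebra_simps)
  have i1: "(\<lambda>x. (f x)^2) integrable_on K" by (rule ci) (unfold f_def, intro continuous_intros)
  have i2: "(\<lambda>x. (2 * D) * f x) integrable_on K" by (rule ci) (unfold f_def, intro continuous_intros)
  have i3: "(\<lambda>x. D^2) integrable_on K" by (rule ci) (intro continuous_intros)
  have "integral K (\<lambda>x. (u \<bullet> x - c)^2) = integral K (\<lambda>x. (f x)^2 + (2 * D) * f x + D^2)"
    by (simp add: eq)
  also have "\<dots> = integral K (\<lambda>x. (f x)^2 + (2 * D) * f x) + integral K (\<lambda>x. D^2)"
    by (rule integral_add[OF integrable_add[OF i1 i2] i3])
  also have "integral K (\<lambda>x. (f x)^2 + (2 * D) * f x) = integral K (\<lambda>x. (f x)^2) + integral K (\<lambda>x. (2 * D) * f x)"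
    by (rule integral_add[OF i1 i2])
  also have "integral K (\<lambda>x. (2 * D) * f x) = (2 * D) * integral K f"
    by (rule integral_mult[symmetric]) (rule ci, unfold f_def, intro continuous_intros)
  also have "integral K f = 0" unfolding f_def by (rule mean_zero[OF K V])
  also have "integral K (\<lambda>x. D^2) = D^2 * measure lebesgue K" by (rule measure_int[OF K])
  finally have "integral K (\<lambda>x. (u \<bullet> x - c)^2) = integral K (\<lambda>x. (f x)^2) + D^2 * measure lebesgue K" by simp
  moreover have "0 \<le> D^2 * measure lebesgue K" using V by simp
  ultimately show ?thesis unfolding f_def by linarith
qed

lemma int_bound:
  fixes K :: "(real^'n) set" and g :: "real^'n \<Rightarrow> real"
  assumes K: "compact K" and g: "continuous_on UNIV g" and B: "\<And>x. x \<in> K \<Longrightarrow> g x \<le> B"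
  shows "integral K g \<le> B * measure lebesgue K"
proof -
  have "integral K g \<le> integral K (\<lambda>x. B)"
    by (rule integral_le) (use cont_integrable[OF K] continuous_on_subset[OF g] B in \<open>auto intro: continuous_intros\<close>)
  then show ?thesis using measure_int[OF K] by simp
qed



lemma det_deriv_rows:
  fixes H D :: "real^'n^'n"
  shows "(\<Sum>p\<in>{p. p permutes (UNIV::'n set)}. of_int (sign p) * (\<Sum>k\<in>UNIV. D$k$(p k) * (\<Prod>j\<in>UNIV-{k}. H$j$(p j))))
       = (\<Sum>k\<in>UNIV. det (\<chi> i. if i = k then D$k else H$i))"
proof -
  have "det (\<chi> i. if i = k then D$k else H$i) =
      (\<Sum>p\<in>{p. p permutes (UNIV::'n set)}. of_int (sign p) * (D$k$(p k) * (\<Prod>j\<in>UNIV-{k}. H$j$(p j))))" for k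
  proof -
    have "(\<Prod>j\<in>UNIV. (\<chi> i. if i = k then D$k else H$i)$j$(p j)) = D$k$(p k) * (\<Prod>j\<in>UNIV-{k}. H$j$(p j))" for p :: "'n \<Rightarrow> 'n"
    proof -
      have "(\<Prod>j\<in>UNIV. (\<chi> i. if i = k then D$k else H$i)$j$(p j)) =
          (\<chi> i. if i = k then D$k else H$i)$k$(p k) * (\<Prod>j\<in>UNIV-{k}. (\<chi> i. if i = k then D$k else H$i)$j$(p j))"
        by (rule prod.remove) auto
      also have "(\<Prod>j\<in>UNIV-{k}. (\<chi> i. if i = k then D$k else H$i)$j$(p j)) = (\<Prod>j\<in>UNIV-{k}. H$j$(p j))"
        by (rule prod.cong) auto
      finally show ?thesis by simp
    qed
    then show ?thesis unfolding det_def by simp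
  qed
  then have "(\<Sum>k\<in>UNIV. det (\<chi> i. if i = k then D$k else H$i)) =
     (\<Sum>k\<in>UNIV. \<Sum>p\<in>{p. p permutes (UNIV::'n set)}. of_int (sign p) * (D$k$(p k) * (\<Prod>j\<in>UNIV-{k}. H$j$(p j))))"
    by simp
  also have "\<dots> = (\<Sum>p\<in>{p. p permutes (UNIV::'n set)}. \<Sum>k\<in>UNIV. of_int (sign p) * (D$k$(p k) * (\<Prod>j\<in>UNIV-{k}. H$j$(p j))))"
    by (rule sum.swap)
  finally show ?thesis by (simp add: sum_distrib_left)
qed

lemma det_row_replace:
  fixes H :: "real^'n^'n"
  assumes "invertible H"
  shows "det (\<chi> i. if i = k then w else H$i) = (w v* matrix_inv H)$k * det H"
proof -
  define x where "x = w v* matrix_inv H"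
  have "x v* H = w" unfolding x_def vector_matrix_mul_assoc matrix_inv_props(2)[OF assms] by simp
  moreover have "(\<Sum>i\<in>UNIV. x$i *s row i H) = x v* H"
    by (simp add: vec_eq_iff sum_component row_def vector_matrix_mult_def mult.commute)
  ultimately have "(\<chi> i. if i = k then (\<Sum>i\<in>UNIV. x$i *s row i H) else row i H) = (\<chi> i. if i = k then w else H$i)"
    by (simp add: vec_eq_iff row_def)
  with cramer_lemma_transpose[of k x H] show ?thesis unfolding x_def by simp
qed

lemma inv_sq_deriv:
  fixes s e c :: real
  assumes "s \<noteq> 0"
  shows "((\<lambda>t. c / (s + t * e)^2) has_field_derivative (c * (-2 * e / s^3))) (at 0)"
proof -
  have "((\<lambda>t. c / (s + t * e)^2) has_field_derivative
      (- (c * (2 * (s + 0 * e) * (0 * e + 1 * e))) / ((s + 0 * e)^2)^2)) (at 0)"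
    using assms by (auto intro!: derivative_eq_intros simp: power2_eq_square)
  moreover have "- (c * (2 * (s + 0 * e) * (0 * e + 1 * e))) / ((s + 0 * e)^2)^2 = c * (-2 * e / s^3)"
    using assms by (simp add: field_simps power2_eq_square power3_eq_cube)
  ultimately show ?thesis by simp
qed

lemma hess_entry:
  "barrier_hess A b y $ j $ k = (\<Sum>i\<in>UNIV. (A$i$j * A$i$k) / (A$i \<bullet> y - b$i)^2)"
  by (simp add: barrier_hess_def sum_component outer_def)

lemma det_hess_deriv:
  fixes A :: "real^'n^'m" and b :: "real^'m"
  assumes pos: "\<And>i. A$i \<bullet> x0 - b$i > 0" and inv: "invertible (barrier_hess A b x0)"
  shows "((\<lambda>t. det (barrier_hess A b (x0 + t *\<^sub>R d))) has_field_derivative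
    det (barrier_hess A b x0) * (\<Sum>i\<in>UNIV. (-2 * (A$i \<bullet> d) / (A$i \<bullet> x0 - b$i)^3) *
       (A$i \<bullet> (matrix_inv (barrier_hess A b x0) *v A$i)))) (at 0)"
proof -
  define s where "s i = A$i \<bullet> x0 - b$i" for i
  define e where "e i = A$i \<bullet> d" for i
  define H where "H = barrier_hess A b x0"
  define G where "G = matrix_inv H"
  define E where "E t j k = barrier_hess A b (x0 + t *\<^sub>R d) $ j $ k" for t j k
  define Dm :: "real^'n^'n" where "Dm = (\<chi> j k. \<Sum>i\<in>UNIV. (A$i$j * A$i$k) * (-2 * e i / s i ^ 3))"
  have Eexp: "E t j k = (\<Sum>i\<in>UNIV. (A$i$j * A$i$k) / (s i + t * e i)^2)" for t j k
    unfolding E_def hess_entry s_def e_def by (simp add: inner_add_right algebra_simps)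
  have E0: "E 0 j k = H$j$k" for j k unfolding E_def H_def by simp
  have dE: "((\<lambda>t. E t j k) has_field_derivative Dm$j$k) (at 0)" for j k
  proof -
    have dm: "Dm$j$k = (\<Sum>i\<in>UNIV. (A$i$j * A$i$k) * (-2 * e i / s i ^ 3))" unfolding Dm_def by simp
    have sn: "s i \<noteq> 0" for i using pos[of i] unfolding s_def by simp
    show ?thesis unfolding Eexp dm by (intro DERIV_sum inv_sq_deriv sn)
  qed
  have detE: "det (barrier_hess A b (x0 + t *\<^sub>R d)) =
     (\<Sum>p\<in>{p. p permutes (UNIV::'n set)}. of_int (sign p) * (\<Prod>j\<in>UNIV. E t j (p j)))" for t
    unfolding det_def E_def ..
  have "((\<lambda>t. \<Sum>p\<in>{p. p permutes (UNIV::'n set)}. of_int (sign p) * (\<Prod>j\<in>UNIV. E t j (p j))) has_field_derivative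
     (\<Sum>p\<in>{p. p permutes (UNIV::'n set)}. of_int (sign p) * (\<Sum>k\<in>UNIV. Dm$k$(p k) * (\<Prod>j\<in>UNIV-{k}. E 0 j (p j))))) (at 0)"
    by (intro DERIV_sum DERIV_cmult has_field_derivative_prod dE)
  also have "(\<Sum>p\<in>{p. p permutes (UNIV::'n set)}. of_int (sign p) * (\<Sum>k\<in>UNIV. Dm$k$(p k) * (\<Prod>j\<in>UNIV-{k}. E 0 j (p j))))
      = (\<Sum>k\<in>UNIV. det (\<chi> i. if i = k then Dm$k else H$i))"
    unfolding E0 by (rule det_deriv_rows)
  also have "\<dots> = (\<Sum>k\<in>UNIV. (Dm$k v* G)$k * det H)"
    unfolding G_def using inv H_def by (simp add: det_row_replace)
  also have "\<dots> = det H * (\<Sum>i\<in>UNIV. (-2 * e i / s i ^ 3) * (A$i \<bullet> (G *v A$i)))"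
  proof -
    have "(\<Sum>k\<in>UNIV. (Dm$k v* G)$k) = (\<Sum>k\<in>UNIV. \<Sum>l\<in>UNIV. \<Sum>i\<in>UNIV. G$l$k * ((A$i$k * A$i$l) * (-2 * e i / s i ^ 3)))"
      by (simp add: Dm_def vector_matrix_mult_def sum_distrib_left sum_distrib_right mult_ac)
    also have "\<dots> = (\<Sum>k\<in>UNIV. \<Sum>i\<in>UNIV. \<Sum>l\<in>UNIV. G$l$k * ((A$i$k * A$i$l) * (-2 * e i / s i ^ 3)))"
      by (rule sum.cong[OF refl], rule sum.swap)
    also have "\<dots> = (\<Sum>i\<in>UNIV. \<Sum>k\<in>UNIV. \<Sum>l\<in>UNIV. G$l$k * ((A$i$k * A$i$l) * (-2 * e i / s i ^ 3)))"
      by (rule sum.swap)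
    also have "\<dots> = (\<Sum>i\<in>UNIV. (-2 * e i / s i ^ 3) * (A$i \<bullet> (G *v A$i)))"
    proof (rule sum.cong[OF refl])
      fix i
      have "A$i \<bullet> (G *v A$i) = (\<Sum>l\<in>UNIV. \<Sum>k\<in>UNIV. A$i$l * (G$l$k * A$i$k))"
        by (simp add: inner_vec_def matrix_vector_mult_def sum_distrib_left)
      also have "\<dots> = (\<Sum>k\<in>UNIV. \<Sum>l\<in>UNIV. A$i$l * (G$l$k * A$i$k))" by (rule sum.swap)
      finally show "(\<Sum>k\<in>UNIV. \<Sum>l\<in>UNIV. G$l$k * ((A$i$k * A$i$l) * (-2 * e i / s i ^ 3))) = (-2 * e i / s i ^ 3) * (A$i \<bullet> (G *v A$i))"
        by (simp add: sum_distrib_left mult_ac)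
    qed
    finally have X: "(\<Sum>k\<in>UNIV. (Dm$k v* G)$k) = (\<Sum>i\<in>UNIV. (-2 * e i / s i ^ 3) * (A$i \<bullet> (G *v A$i)))" .
    have "(\<Sum>k\<in>UNIV. (Dm$k v* G)$k * det H) = det H * (\<Sum>k\<in>UNIV. (Dm$k v* G)$k)"
      by (simp add: sum_distrib_left mult.commute)
    then show ?thesis unfolding X .
  qed
  finally show ?thesis unfolding detE[symmetric] H_def G_def s_def e_def .
qed

lemma vc_grad:
  fixes A :: "real^'n^'m" and b :: "real^'m"
  assumes vc: "is_vol_center A b x0" and inv: "invertible (barrier_hess A b x0)"
    and dpos: "det (barrier_hess A b x0) > 0"
  shows "(\<Sum>i\<in>UNIV. (A$i \<bullet> d) * (A$i \<bullet> (matrix_inv (barrier_hess A b x0) *v A$i)) / (A$i \<bullet> x0 - b$i)^3) = 0"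
proof -
  define s where "s i = A$i \<bullet> x0 - b$i" for i
  define e where "e i = A$i \<bullet> d" for i
  define H where "H = barrier_hess A b x0"
  define G where "G = matrix_inv H"
  define S' where "S' = (\<Sum>i\<in>UNIV. (-2 * e i / s i ^ 3) * (A$i \<bullet> (G *v A$i)))"
  have x0K: "x0 \<in> strict_polytope A b" and mn: "\<And>y. y \<in> strict_polytope A b \<Longrightarrow> vol_barrier A b x0 \<le> vol_barrier A b y"
    using vc unfolding is_vol_center_def by auto
  have pos: "A$i \<bullet> x0 - b$i > 0" for i using x0K unfolding strict_polytope_def by auto
  have spos: "s i > 0" for i using pos unfolding s_def by simp
  have gd: "((\<lambda>t. det (barrier_hess A b (x0 + t *\<^sub>R d))) has_field_derivative det H * S') (at 0)"
    unfolding H_def S'_def G_def e_def s_def by (rule det_hess_deriv[OF pos inv])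
  have g0: "det (barrier_hess A b (x0 + 0 *\<^sub>R d)) = det H" unfolding H_def by simp
  have Fd: "((\<lambda>t. vol_barrier A b (x0 + t *\<^sub>R d)) has_field_derivative (inverse (det H) * (det H * S')) / 2) (at 0)"
  proof -
    have "((\<lambda>t. ln (det (barrier_hess A b (x0 + t *\<^sub>R d)))) has_field_derivative inverse (det H) * (det H * S')) (at 0)"
    proof -
      have l: "(ln has_real_derivative inverse (det H)) (at ((\<lambda>t. det (barrier_hess A b (x0 + t *\<^sub>R d))) 0))"
        using DERIV_ln[of "det H"] dpos H_def by simp
      show ?thesis using DERIV_chain2[OF l gd] by simp
    qed
    then show ?thesis unfolding vol_barrier_def by (rule DERIV_cdivide)
  qed
  define \<delta> where "\<delta> = Min (range (\<lambda>i. s i / (\<bar>e i\<bar> + 1)))"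
  have \<delta>0: "\<delta> > 0" unfolding \<delta>_def using spos by (simp add: Min_gr_iff)
  have \<delta>le: "\<delta> \<le> s i / (\<bar>e i\<bar> + 1)" for i unfolding \<delta>_def by (rule Min_le) auto
  have loc: "\<forall>t. \<bar>0 - t\<bar> < \<delta> \<longrightarrow> vol_barrier A b (x0 + 0 *\<^sub>R d) \<le> vol_barrier A b (x0 + t *\<^sub>R d)"
  proof (intro allI impI)
    fix t :: real assume t: "\<bar>0 - t\<bar> < \<delta>"
    have "x0 + t *\<^sub>R d \<in> strict_polytope A b" unfolding strict_polytope_def
    proof (intro CollectI allI)
      fix i
      have "\<bar>t * e i\<bar> \<le> \<bar>t\<bar> * (\<bar>e i\<bar> + 1)" by (simp add: abs_mult mult_left_mono)
      also have "\<dots> < \<delta> * (\<bar>e i\<bar> + 1)" using t by (intro mult_strict_right_mono) auto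
      also have "\<dots> \<le> s i" using \<delta>le[of i] by (simp add: field_simps)
      finally have "\<bar>t * e i\<bar> < s i" .
      then show "A $ i \<bullet> (x0 + t *\<^sub>R d) > b $ i" unfolding s_def e_def by (simp add: inner_add_right)
    qed
    then show "vol_barrier A b (x0 + 0 *\<^sub>R d) \<le> vol_barrier A b (x0 + t *\<^sub>R d)" using mn by simp
  qed
  have "(inverse (det H) * (det H * S')) / 2 = 0" by (rule DERIV_local_min[OF Fd \<delta>0 loc])
  then have "S' = 0" using dpos H_def by simp
  then have "(-2) * (\<Sum>i\<in>UNIV. e i * (A$i \<bullet> (G *v A$i)) / s i ^ 3) = 0"
    unfolding S'_def by (simp add: sum_distrib_left algebra_simps)
  then show ?thesis unfolding e_def s_def G_def H_def by simp
qed

lemma y_bound: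
  fixes y \<sigma> :: "'m::finite \<Rightarrow> real"
  assumes y1: "\<And>j. y j \<ge> -1" and s0: "\<And>j. \<sigma> j \<ge> 0" and sN: "(\<Sum>j\<in>UNIV. \<sigma> j) = N"
    and sy: "(\<Sum>j\<in>UNIV. \<sigma> j * y j) = 0" and cs: "\<And>j. (y j)^2 \<le> \<sigma> j * (\<Sum>k\<in>UNIV. (y k)^2)"
    and N1: "N \<ge> 1"
  shows "y i \<le> real CARD('m) * N"
proof -
  define Mx where "Mx = Max (range y)"
  have yM: "y j \<le> Mx" for j unfolding Mx_def by (rule Max_ge) auto
  have "Mx \<in> range y" unfolding Mx_def by (rule Max_in) auto
  then obtain i0 where i0: "y i0 = Mx" by auto
  have C1: "real CARD('m) \<ge> 1" by (simp add: Suc_le_eq)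
  have "Mx \<le> real CARD('m) * N"
  proof (cases "Mx \<le> 1")
    case True
    have "1 \<le> real CARD('m) * N" using C1 N1 by (metis mult_mono' mult_1 zero_le_one order_trans)
    with True show ?thesis by linarith
  next
    case False
    then have M1: "Mx > 1" by simp
    have sq: "(y j)^2 \<le> Mx^2" for j
    proof -
      have "\<bar>y j\<bar> \<le> Mx" using y1[of j] yM[of j] M1 by linarith
      then show ?thesis using abs_le_square_iff[of "y j" Mx] M1 by simp
    qed
    have "(\<Sum>k\<in>UNIV. (y k)^2) \<le> (\<Sum>k\<in>(UNIV::'m set). Mx^2)" by (rule sum_mono) (rule sq)
    then have R: "(\<Sum>k\<in>UNIV. (y k)^2) \<le> real CARD('m) * Mx^2" by simp
    have "Mx^2 \<le> \<sigma> i0 * (\<Sum>k\<in>UNIV. (y k)^2)" using cs[of i0] i0 by simp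
    also have "\<dots> \<le> \<sigma> i0 * (real CARD('m) * Mx^2)" using R s0[of i0] by (simp add: mult_left_mono)
    finally have "1 * Mx^2 \<le> (\<sigma> i0 * real CARD('m)) * Mx^2" by (simp add: mult_ac)
    then have sm: "1 \<le> \<sigma> i0 * real CARD('m)" using M1 by (subst (asm) mult_le_cancel_right) auto
    have "(\<Sum>j\<in>UNIV. \<sigma> j * y j) = \<sigma> i0 * y i0 + (\<Sum>j\<in>UNIV-{i0}. \<sigma> j * y j)"
      by (rule sum.remove) auto
    moreover have "(\<Sum>j\<in>UNIV-{i0}. \<sigma> j * y j) \<ge> (\<Sum>j\<in>UNIV-{i0}. - \<sigma> j)"
      by (rule sum_mono) (use y1 s0 in \<open>metis mult_minus1_right mult_left_mono\<close>)
    moreover have "(\<Sum>j\<in>UNIV. \<sigma> j) = \<sigma> i0 + (\<Sum>j\<in>UNIV-{i0}. \<sigma> j)"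
      by (rule sum.remove) auto
    ultimately have "\<sigma> i0 * Mx \<le> N" using sy sN s0[of i0] i0 by (simp add: sum_negf)
    have "Mx = Mx * 1" by simp
    also have "\<dots> \<le> Mx * (\<sigma> i0 * real CARD('m))" using sm M1 by (intro mult_left_mono) auto
    also have "\<dots> = (\<sigma> i0 * Mx) * real CARD('m)" by simp
    also have "\<dots> \<le> N * real CARD('m)" using \<open>\<sigma> i0 * Mx \<le> N\<close> by (intro mult_right_mono) auto
    finally show ?thesis by (simp add: mult.commute)
  qed
  with yM[of i] show ?thesis by linarith
qed



lemma polytope_compact_convex:
  fixes A :: "real^'n^'m" and b :: "real^'m"
  assumes "bounded (polytope A b)"
  shows "compact (polytope A b)" "convex (polytope A b)"
proof -
  have "closed (polytope A b)" unfolding polytope_def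
    by (intro closed_Collect_all closed_Collect_le continuous_intros)
  then show "compact (polytope A b)" using assms compact_eq_bounded_closed by blast
  show "convex (polytope A b)" unfolding polytope_def
  proof (rule convexI, safe)
    fix x y :: "real^'n" and u v :: real and i
    assume x: "\<forall>i. b $ i \<le> A $ i \<bullet> x" and y: "\<forall>i. b $ i \<le> A $ i \<bullet> y" and uv: "0 \<le> u" "0 \<le> v" "u + v = 1"
    have "u * b$i + v * b$i \<le> u * (A$i \<bullet> x) + v * (A$i \<bullet> y)"
      using x y uv by (intro add_mono mult_left_mono) auto
    moreover have "b$i = u * b$i + v * b$i" using uv by (metis distrib_right mult_1)
    ultimately show "b $ i \<le> A $ i \<bullet> (u *\<^sub>R x + v *\<^sub>R y)"
      by (simp add: inner_add_right)
  qed
qed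

lemma pos_measure:
  fixes K :: "(real^'n) set"
  assumes "compact K" "interior K \<noteq> {}"
  shows "measure lebesgue K > 0"
proof -
  obtain z where "z \<in> interior K" using assms by auto
  then obtain e where e: "e > 0" "ball z e \<subseteq> K" using mem_interior by blast
  have "0 < measure lborel (ball z e)" using content_ball_pos[OF e(1)] by simp
  also have "measure lborel (ball z e) = measure lebesgue (ball z e)"
    by (simp add: measure_completion)
  also have "\<dots> \<le> measure lebesgue K"
    by (rule measure_mono_fmeasurable[OF e(2)]) (auto intro: lmeasurable_compact assms)
  finally show ?thesis .
qed

theorem lemma4p12:
  fixes A :: "real^'n^'m" and b :: "real^'m" and xc :: "real^'n"
  assumes "bounded (polytope A b)"
    and "interior (polytope A b) \<noteq> {}"
    and "is_vol_center A b xc"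
  shows "invertible (covariance (polytope A b)) \<and>
    loewner_le ((1 / (4 * real CARD('m) ^ 3 * real CARD('n) ^ 2)) *\<^sub>R barrier_hess A b xc)
               (matrix_inv (covariance (polytope A b))) \<and>
    loewner_le (matrix_inv (covariance (polytope A b)))
               ((4 * real CARD('n) ^ 2) *\<^sub>R barrier_hess A b xc)"
proof -
  define K where "K = polytope A b"
  define H where "H = barrier_hess A b xc"
  define G where "G = matrix_inv H"
  define C where "C = covariance K"
  define V where "V = measure lebesgue K"
  define N where "N = real CARD('n)"
  define M where "M = real CARD('m)"
  define s where "s i = A$i \<bullet> xc - b$i" for i
  have N1: "N \<ge> 1" unfolding N_def by (simp add: Suc_le_eq)
  have M1: "M \<ge> 1" unfolding M_def by (simp add: Suc_le_eq)
  have Kc: "compact K" "convex K" unfolding K_def using polytope_compact_convex[OF assms(1)] by auto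
  have V0: "V > 0" unfolding V_def using pos_measure[OF Kc(1)] assms(2) K_def by simp
  have xcS: "xc \<in> strict_polytope A b" using assms(3) unfolding is_vol_center_def by simp
  have spos: "s i > 0" for i using xcS unfolding strict_polytope_def s_def by auto
  have xcK: "xc \<in> K" using xcS unfolding K_def polytope_def strict_polytope_def by (auto intro: less_imp_le)
  have Bd: "bounded K" using assms(1) K_def by simp
  have Hq: "w \<bullet> (H *v v) = (\<Sum>i\<in>UNIV. (A$i \<bullet> w) * (A$i \<bullet> v) / (s i)^2)" for w v
    unfolding H_def s_def by (rule hess_bilin)
  have Hsym: "w \<bullet> (H *v v) = v \<bullet> (H *v w)" for v w unfolding H_def by (rule sym_bilin[OF hess_sym])
  have Hquad: "v \<bullet> (H *v v) = (\<Sum>i\<in>UNIV. (A$i \<bullet> v)^2 / (s i)^2)" for v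
    unfolding Hq by (simp add: power2_eq_square)
  have Hpsd: "0 \<le> v \<bullet> (H *v v)" for v unfolding Hquad by (intro sum_nonneg) auto
  have Hpd: "0 < v \<bullet> (H *v v)" if v0: "v \<noteq> 0" for v
  proof (rule ccontr)
    assume "\<not> 0 < v \<bullet> (H *v v)"
    then have "(\<Sum>i\<in>UNIV. (A$i \<bullet> v)^2 / (s i)^2) = 0" using Hpsd[of v] Hquad[of v] by simp
    then have "\<forall>i\<in>UNIV. (A$i \<bullet> v)^2 / (s i)^2 = 0" by (subst (asm) sum_nonneg_eq_0_iff) auto
    then have av: "A$i \<bullet> v = 0" for i using spos[of i] by auto
    have line: "xc + t *\<^sub>R v \<in> K" for t
      using xcK av unfolding K_def polytope_def by (simp add: inner_add_right)
    obtain B where B: "\<And>x. x \<in> K \<Longrightarrow> norm x \<le> B" using Bd unfolding bounded_iff by blast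
    define t where "t = (B + norm xc + 1) / norm v"
    have nv: "norm v > 0" using v0 by simp
    have Bp: "0 \<le> B + (1 + norm xc)" using B[OF xcK] norm_ge_zero[of xc] by linarith
    have "norm (t *\<^sub>R v) = B + norm xc + 1" unfolding t_def using nv Bp
      by (simp add: field_simps)
    moreover have "norm (t *\<^sub>R v) \<le> norm (xc + t *\<^sub>R v) + norm xc" using norm_triangle_ineq4[of "xc + t *\<^sub>R v" xc] by simp
    moreover have "norm (xc + t *\<^sub>R v) \<le> B" using B[OF line[of t]] .
    ultimately show False by linarith
  qed
  have Hinv: "invertible H"
  proof (rule inv_of_ker)
    fix v assume "H *v v = 0"
    then have "v \<bullet> (H *v v) = 0" by simp
    then show "v = 0" using Hpd by force
  qed
  have Hdet: "det H > 0" by (rule pd_det_pos) (rule Hpd)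
  have HG: "H ** G = mat 1" "G ** H = mat 1" unfolding G_def using matrix_inv_props[OF Hinv] by auto
  have HGa: "H *v (G *v a) = a" for a by (simp add: matrix_vector_mul_assoc HG(1))
  have sig0: "0 \<le> A$i \<bullet> (G *v A$i)" for i
  proof -
    have "A$i \<bullet> (G *v A$i) = (G *v A$i) \<bullet> (H *v (G *v A$i))" by (simp add: HGa inner_commute)
    then show ?thesis using Hpsd by simp
  qed
  have sigcs: "(A$i \<bullet> d)^2 \<le> (A$i \<bullet> (G *v A$i)) * (d \<bullet> (H *v d))" for i d
  proof -
    define w where "w = G *v A$i"
    have "A$i \<bullet> d = d \<bullet> (H *v w)" unfolding w_def HGa by (simp add: inner_commute)
    also have "\<dots> = w \<bullet> (H *v d)" by (rule Hsym[symmetric])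
    finally have e: "A$i \<bullet> d = w \<bullet> (H *v d)" .
    have "(w \<bullet> (H *v d))^2 \<le> (w \<bullet> (H *v w)) * (d \<bullet> (H *v d))"
      by (rule psd_cs) (auto simp: Hsym Hpsd)
    moreover have "w \<bullet> (H *v w) = A$i \<bullet> (G *v A$i)" unfolding w_def HGa by (simp add: inner_commute)
    ultimately show ?thesis using e by simp
  qed
  have trace: "(\<Sum>i\<in>UNIV. A$i \<bullet> (G *v A$i) / (s i)^2) = N"
  proof -
    have "N = (\<Sum>j\<in>(UNIV::'n set). (G ** H)$j$j)" unfolding HG(2) N_def by (simp add: mat_def)
    also have "\<dots> = (\<Sum>j\<in>UNIV. \<Sum>k\<in>UNIV. \<Sum>i\<in>UNIV. A$i$j * G$j$k * A$i$k / (s i)^2)"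
      unfolding H_def by (simp add: matrix_matrix_mult_def hess_entry s_def sum_distrib_left mult_ac)
    also have "\<dots> = (\<Sum>j\<in>UNIV. \<Sum>i\<in>UNIV. \<Sum>k\<in>UNIV. A$i$j * G$j$k * A$i$k / (s i)^2)"
      by (rule sum.cong[OF refl], rule sum.swap)
    also have "\<dots> = (\<Sum>i\<in>UNIV. \<Sum>j\<in>UNIV. \<Sum>k\<in>UNIV. A$i$j * G$j$k * A$i$k / (s i)^2)"
      by (rule sum.swap)
    also have "\<dots> = (\<Sum>i\<in>UNIV. A$i \<bullet> (G *v A$i) / (s i)^2)"
      by (simp add: inner_vec_def matrix_vector_mult_def sum_distrib_left sum_divide_distrib mult_ac)
    finally show ?thesis by simp
  qed
  have grad: "(\<Sum>i\<in>UNIV. (A$i \<bullet> d) * (A$i \<bullet> (G *v A$i)) / (s i)^3) = 0" for d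
    using vc_grad[OF assms(3) Hinv[unfolded H_def] Hdet[unfolded H_def], of d] unfolding G_def H_def s_def .
  have Ybd: "A$i \<bullet> (x - xc) \<le> M * N * s i" if xK: "x \<in> K" for x i
  proof -
    define d where "d = x - xc"
    define y where "y j = (A$j \<bullet> d) / s j" for j
    define \<sigma> where "\<sigma> j = A$j \<bullet> (G *v A$j) / (s j)^2" for j
    have y1: "y j \<ge> -1" for j
    proof -
      have "A$j \<bullet> x \<ge> b$j" using xK unfolding K_def polytope_def by auto
      then have "A$j \<bullet> d \<ge> - s j" unfolding d_def s_def by (simp add: inner_diff_right)
      then show ?thesis unfolding y_def using spos[of j] by (simp add: field_simps)
    qed
    have s0: "\<sigma> j \<ge> 0" for j unfolding \<sigma>_def using sig0 by simp
    have sN: "(\<Sum>j\<in>UNIV. \<sigma> j) = N" unfolding \<sigma>_def by (rule trace)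
    have sy: "(\<Sum>j\<in>UNIV. \<sigma> j * y j) = 0"
    proof -
      have "\<sigma> j * y j = (A$j \<bullet> d) * (A$j \<bullet> (G *v A$j)) / (s j)^3" for j
        unfolding \<sigma>_def y_def using spos[of j] by (simp add: field_simps power2_eq_square power3_eq_cube)
      then show ?thesis using grad[of d] by simp
    qed
    have R: "(\<Sum>k\<in>UNIV. (y k)^2) = d \<bullet> (H *v d)" unfolding Hquad y_def by (simp add: power_divide)
    have cs: "(y j)^2 \<le> \<sigma> j * (\<Sum>k\<in>UNIV. (y k)^2)" for j
    proof -
      have "(y j)^2 = (A$j \<bullet> d)^2 / (s j)^2" unfolding y_def by (simp add: power_divide)
      also have "\<dots> \<le> ((A$j \<bullet> (G *v A$j)) * (d \<bullet> (H *v d))) / (s j)^2"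
        by (rule divide_right_mono[OF sigcs]) simp
      also have "\<dots> = \<sigma> j * (\<Sum>k\<in>UNIV. (y k)^2)" unfolding R \<sigma>_def by simp
      finally show ?thesis .
    qed
    have "y i \<le> real CARD('m) * N" by (rule y_bound[OF y1 s0 sN sy cs N1])
    then have "(A$i \<bullet> d) / s i \<le> M * N" unfolding y_def M_def .
    then show ?thesis unfolding d_def using spos[of i] by (simp add: field_simps)
  qed
  define cg where "cg = centroid K"
  define W where "W u = integral K (\<lambda>x. (u \<bullet> (x - cg))^2)" for u
  have Cb: "w \<bullet> (C *v v) = integral K (\<lambda>x. (w \<bullet> (x - cg)) * (v \<bullet> (x - cg))) / V" for w v
    unfolding C_def V_def cg_def by (rule cov_bilin[OF Kc(1)])
  have Csym: "w \<bullet> (C *v v) = v \<bullet> (C *v w)" for v w unfolding Cb by (simp add: mult.commute)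
  have CW: "u \<bullet> (C *v u) = W u / V" for u unfolding Cb W_def by (simp add: power2_eq_square)
  have W0: "W u \<ge> 0" for u unfolding W_def
    by (rule integral_nonneg) (rule cont_integrable[OF Kc(1)], intro continuous_intros, simp)
  have Cpsd: "0 \<le> u \<bullet> (C *v u)" for u unfolding CW using W0 V0 by simp
  have C4: "(u \<bullet> v)^2 \<le> 4 * N^2 * (v \<bullet> (H *v v)) * (u \<bullet> (C *v u))" if v0: "v \<noteq> 0" for u v
  proof -
    define \<rho> where "\<rho> = sqrt (v \<bullet> (H *v v))"
    have \<rho>0: "\<rho> > 0" unfolding \<rho>_def using Hpd[OF v0] by simp
    have \<rho>2: "\<rho>^2 = v \<bullet> (H *v v)" unfolding \<rho>_def using Hpsd[of v] by simp
    have av: "\<bar>A$i \<bullet> v\<bar> \<le> \<rho> * s i" for i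
    proof -
      have "(A$i \<bullet> v)^2 / (s i)^2 \<le> (\<Sum>j\<in>UNIV. (A$j \<bullet> v)^2 / (s j)^2)"
        by (rule member_le_sum) auto
      then have "(A$i \<bullet> v)^2 / (s i)^2 \<le> \<rho>^2" unfolding \<rho>2 Hquad .
      then have "(A$i \<bullet> v)^2 \<le> (\<rho> * s i)^2" using spos[of i] by (simp add: field_simps power_mult_distrib)
      moreover have "0 \<le> \<rho> * s i" using \<rho>0 spos[of i] by simp
      ultimately show ?thesis using power2_le_iff_abs_le by blast
    qed
    define p where "p = xc + (1 / \<rho>) *\<^sub>R v"
    define q where "q = xc - (1 / \<rho>) *\<^sub>R v"
    have pK: "p \<in> K" unfolding K_def polytope_def p_def
    proof (intro CollectI allI)
      fix i
      have "- (A$i \<bullet> v) \<le> \<rho> * s i" using av[of i] by linarith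
      then have "- ((A$i \<bullet> v) / \<rho>) \<le> s i" using \<rho>0 by (simp add: field_simps)
      then show "b$i \<le> A$i \<bullet> (xc + (1 / \<rho>) *\<^sub>R v)" unfolding s_def by (simp add: inner_add_right)
    qed
    have qK: "q \<in> K" unfolding K_def polytope_def q_def
    proof (intro CollectI allI)
      fix i
      have "A$i \<bullet> v \<le> \<rho> * s i" using av[of i] by linarith
      then have "(A$i \<bullet> v) / \<rho> \<le> s i" using \<rho>0 by (simp add: field_simps)
      then show "b$i \<le> A$i \<bullet> (xc - (1 / \<rho>) *\<^sub>R v)" unfolding s_def by (simp add: inner_diff_right)
    qed
    define t where "t = (u \<bullet> v) / \<rho>"
    have up: "u \<bullet> p = u \<bullet> xc + t" unfolding p_def t_def by (simp add: inner_add_right)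
    have uq: "u \<bullet> q = u \<bullet> xc - t" unfolding q_def t_def by (simp add: inner_diff_right)
    have "\<bar>t\<bar>^2 * V \<le> 4 * N^2 * W u"
    proof (cases "t \<ge> 0")
      case True
      show ?thesis unfolding V_def N_def W_def cg_def
        by (rule var_lower[OF Kc V0[unfolded V_def] pK _ qK]) (use up uq True in auto)
    next
      case False
      show ?thesis unfolding V_def N_def W_def cg_def
        by (rule var_lower[OF Kc V0[unfolded V_def] qK _ pK]) (use up uq False in auto)
    qed
    then have "t^2 * V \<le> 4 * N^2 * ((u \<bullet> (C *v u)) * V)" unfolding CW using V0 by simp
    then have "t^2 \<le> 4 * N^2 * (u \<bullet> (C *v u))" using V0 by (simp add: mult.assoc[symmetric])
    then have "(u \<bullet> v)^2 / \<rho>^2 \<le> 4 * N^2 * (u \<bullet> (C *v u))" unfolding t_def by (simp add: power_divide)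
    then have "(u \<bullet> v)^2 \<le> 4 * N^2 * (u \<bullet> (C *v u)) * \<rho>^2" using \<rho>0 by (simp add: field_simps)
    then show ?thesis unfolding \<rho>2 by (simp add: mult_ac)
  qed
  have Cinv: "invertible C"
  proof (rule inv_of_ker)
    fix u assume Cu: "C *v u = 0"
    show "u = 0"
    proof (rule ccontr)
      assume u0: "u \<noteq> 0"
      have "(u \<bullet> u)^2 \<le> 4 * N^2 * (u \<bullet> (H *v u)) * (u \<bullet> (C *v u))" by (rule C4[OF u0])
      then have "(u \<bullet> u)^2 \<le> 0" using Cu by simp
      then show False using u0 by simp
    qed
  qed
  define Ci where "Ci = matrix_inv C"
  have CCi: "C ** Ci = mat 1" unfolding Ci_def using matrix_inv_props[OF Cinv] by auto
  have CCiv: "C *v (Ci *v v) = v" for v by (simp add: matrix_vector_mul_assoc CCi)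
  have vCi: "v \<bullet> (Ci *v v) = (Ci *v v) \<bullet> (C *v (Ci *v v))" for v
    by (simp add: CCiv inner_commute)
  have UP: "loewner_le Ci ((4 * N^2) *\<^sub>R H)"
    unfolding loewner_le_def
  proof
    fix v
    define u where "u = Ci *v v"
    define z where "z = v \<bullet> u"
    have z: "z = u \<bullet> (C *v u)" unfolding z_def u_def by (rule vCi)
    have z0: "z \<ge> 0" using Cpsd z by simp
    have rhs: "v \<bullet> (((4 * N^2) *\<^sub>R H) *v v) = 4 * N^2 * (v \<bullet> (H *v v))"
      by (simp flip: scaleR_matrix_vector_assoc)
    have "z \<le> 4 * N^2 * (v \<bullet> (H *v v))"
    proof (cases "v = 0")
      case True then show ?thesis unfolding z_def by simp
    next
      case False
      have "(u \<bullet> v)^2 \<le> 4 * N^2 * (v \<bullet> (H *v v)) * (u \<bullet> (C *v u))" by (rule C4[OF False])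
      then have "z * z \<le> (4 * N^2 * (v \<bullet> (H *v v))) * z" unfolding z[symmetric]
        by (simp add: z_def inner_commute power2_eq_square)
      then show ?thesis using z0 Hpsd[of v] N1
        by (metis mult_right_le_imp_le antisym_conv2 mult_eq_0_iff zero_le_mult_iff zero_le_numeral zero_le_power2)
    qed
    then show "v \<bullet> (Ci *v v) \<le> v \<bullet> (((4 * N^2) *\<^sub>R H) *v v)" unfolding rhs z_def u_def .
  qed
  have aCa: "A$i \<bullet> (C *v A$i) \<le> (M * N * s i)^2" for i
  proof -
    have "W (A$i) \<le> integral K (\<lambda>x. (A$i \<bullet> x - A$i \<bullet> xc)^2)"
      unfolding W_def cg_def by (rule var_le_shift[OF Kc(1) V0[unfolded V_def]])
    also have "\<dots> \<le> (M * N * s i)^2 * V" unfolding V_def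
    proof (rule int_bound[OF Kc(1)])
      show "continuous_on UNIV (\<lambda>x. (A$i \<bullet> x - A$i \<bullet> xc)^2)" by (intro continuous_intros)
      fix x assume xK: "x \<in> K"
      have up: "A$i \<bullet> x - A$i \<bullet> xc \<le> M * N * s i" using Ybd[OF xK, of i] by (simp add: inner_diff_right)
      have lo: "- s i \<le> A$i \<bullet> x - A$i \<bullet> xc" using xK unfolding K_def polytope_def s_def by auto
      have "1 * 1 \<le> M * N" using M1 N1 by (intro mult_mono) auto
      then have "1 * s i \<le> (M * N) * s i" using spos[of i] by (intro mult_right_mono) auto
      then have "s i \<le> M * N * s i" by simp
      then have "\<bar>A$i \<bullet> x - A$i \<bullet> xc\<bar> \<le> M * N * s i" using up lo by linarith
      then show "(A$i \<bullet> x - A$i \<bullet> xc)^2 \<le> (M * N * s i)^2"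
        using power2_le_iff_abs_le[of "M * N * s i"] spos[of i] M1 N1 by simp
    qed
    finally have "W (A$i) \<le> (M * N * s i)^2 * V" .
    then show ?thesis unfolding CW using V0 by (simp add: field_simps)
  qed
  have LOW: "loewner_le ((1 / (4 * M^3 * N^2)) *\<^sub>R H) Ci"
    unfolding loewner_le_def
  proof
    fix v
    define u where "u = Ci *v v"
    define z where "z = v \<bullet> u"
    have z: "z = u \<bullet> (C *v u)" unfolding z_def u_def by (rule vCi)
    have z0: "z \<ge> 0" using Cpsd z by simp
    have Cu: "C *v u = v" unfolding u_def by (rule CCiv)
    have each: "(A$i \<bullet> v)^2 / (s i)^2 \<le> (M * N)^2 * z" for i
    proof -
      have "(A$i \<bullet> v)^2 = (A$i \<bullet> (C *v u))^2" unfolding Cu ..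
      also have "\<dots> \<le> (A$i \<bullet> (C *v A$i)) * (u \<bullet> (C *v u))"
        by (rule psd_cs) (auto simp: Csym Cpsd)
      also have "\<dots> \<le> (M * N * s i)^2 * z" unfolding z[symmetric] using aCa[of i] z0
        by (rule mult_right_mono)
      finally show ?thesis using spos[of i] by (simp add: field_simps power_mult_distrib)
    qed
    have "v \<bullet> (H *v v) \<le> (\<Sum>i\<in>(UNIV::'m set). (M * N)^2 * z)" unfolding Hquad
      by (rule sum_mono) (rule each)
    also have "\<dots> = M^3 * N^2 * z" unfolding M_def by (simp add: power2_eq_square power3_eq_cube mult_ac)
    finally have vH: "v \<bullet> (H *v v) \<le> M^3 * N^2 * z" .
    have pos: "4 * M^3 * N^2 > 0" using M1 N1 by simp
    have "v \<bullet> (((1 / (4 * M^3 * N^2)) *\<^sub>R H) *v v) = (v \<bullet> (H *v v)) / (4 * M^3 * N^2)"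
      by (simp flip: scaleR_matrix_vector_assoc)
    also have "\<dots> \<le> (M^3 * N^2 * z) / (4 * M^3 * N^2)" using vH pos by (intro divide_right_mono) auto
    also have "\<dots> = z / 4" using M1 N1 by (simp add: field_simps)
    also have "\<dots> \<le> z" using z0 by simp
    finally show "v \<bullet> (((1 / (4 * M^3 * N^2)) *\<^sub>R H) *v v) \<le> v \<bullet> (Ci *v v)" unfolding z_def u_def .
  qed
  show ?thesis using Cinv UP LOW unfolding C_def Ci_def H_def K_def M_def N_def by simp
qed

end
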